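(* (Wedderburn Formula.) Let $t\in\mathbb{R}$, let $D$ be a nonconstant complex polynomial with $\mu_a$ the multiplicity of each root $a$. The remainder of the division of the generalized polynomial $e^{tX}$ by $D$ (the unique polynomial $R$ of degree $<\deg D$ with $e^{tX}=Dq+R$, $q$ a generalized polynomial) is $$\sum_{D(a)=0}J_a^{\mu_a-1}\!\left(e^{tX}\frac{(X-a)^{\mu_a}}{D(X)}\right)\frac{D(X)}{(X-a)^{\mu_a}},$$ where $J_a^{\mu}(e^{tX}g(X))$, for a rational fraction $g$ without pole at $a$ and $\mu\ge0$, is the unique polynomial of degree $\le\mu$ congruent modulo $(X-a)^{\mu+1}$ to $e^{at}J_a^\mu(g)\sum_{n=0}^{\mu}\frac{t^n(X-a)^n}{n!}$.
   Context: A generalized polynomial is a family $f=(f_a)_{a\in\mathbb{C}}$ with $f_a=\sum_{n\ge0}f_{a,n}(X-a)^n\in\mathbb{C}[[X-a]]$, with componentwise operations; complex polynomials and rational fractions without poles are identified with families of their Taylor expansions. $e^{tX}$ is the generalized polynomial $\big(e^{at}\sum_{n\ge0}\frac{t^n(X-a)^n}{n!}\big)_{a\in\mathbb{C}}$. $J_a^{m}(h):=\sum_{n\le m}h_{a,n}(X-a)^n$. *)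

theory Defs
  imports "HOL-Computational_Algebra.Computational_Algebra"
begin

text \<open>A generalized polynomial: a family (f_a) of formal power series, f_a in C[[X-a]],
  represented as a function a \<mapsto> (power series in the variable X-a).\<close>
type_synonym gpoly = "complex \<Rightarrow> complex fps"

definition taylor :: "complex poly \<Rightarrow> complex \<Rightarrow> complex fps" where
  "taylor p a = fps_of_poly (pcompose p [:a, 1:])"

definition gp_of_poly :: "complex poly \<Rightarrow> gpoly" where
  "gp_of_poly p = (\<lambda>a. taylor p a)"

definition gp_mult :: "gpoly \<Rightarrow> gpoly \<Rightarrow> gpoly" where
  "gp_mult f g = (\<lambda>a. f a * g a)"

definition gp_add :: "gpoly \<Rightarrow> gpoly \<Rightarrow> gpoly" where
  "gp_add f g = (\<lambda>a. f a + g a)"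

text \<open>The generalized polynomial e^{tX}: at a, e^{at} sum t^n (X-a)^n / n!.\<close>
definition gp_exp :: "real \<Rightarrow> gpoly" where
  "gp_exp t = (\<lambda>a. fps_const (exp (a * complex_of_real t)) * fps_exp (complex_of_real t))"

definition jet :: "complex \<Rightarrow> nat \<Rightarrow> complex fps \<Rightarrow> complex poly" where
  "jet a m h = (\<Sum>n\<le>m. smult (h $ n) ([:-a, 1:] ^ n))"

text \<open>The Wedderburn sum: sum over roots a of D of
  J_a^{mu_a-1}(e^{tX} (X-a)^{mu_a}/D(X)) * D(X)/(X-a)^{mu_a}; the expansion of the rational
  fraction (X-a)^{mu_a}/D at a is the quotient of the Taylor expansions (fps division,
  which cancels the common factor (X-a)^{mu_a}).\<close>
definition wedderburn_sum :: "real \<Rightarrow> complex poly \<Rightarrow> complex poly" where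
  "wedderburn_sum t D =
     (\<Sum>a\<in>{a. poly D a = 0}.
        jet a (order a D - 1)
          (gp_exp t a * (taylor ([:-a, 1:] ^ order a D) a / taylor D a))
        * (D div [:-a, 1:] ^ order a D))"

end

theory Submission
  imports Defs
begin

lemma taylor_add: "taylor (p + q) a = taylor p a + taylor q a"
  by (simp add: taylor_def pcompose_add fps_of_poly_add)
lemma taylor_diff: "taylor (p - q) a = taylor p a - taylor q a"
  by (simp add: taylor_def pcompose_diff fps_of_poly_diff)
lemma taylor_mult: "taylor (p * q) a = taylor p a * taylor q a"
  by (simp add: taylor_def pcompose_mult fps_of_poly_mult)
lemma taylor_smult: "taylor (smult c p) a = fps_const c * taylor p a"
  by (simp add: taylor_def pcompose_smult fps_of_poly_smult)
lemma taylor_sum: "taylor (sum f A) a = (\<Sum>x\<in>A. taylor (f x) a)"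
  by (simp add: taylor_def pcompose_sum fps_of_poly_sum)
lemma taylor_power: "taylor (p ^ n) a = taylor p a ^ n"
  by (induct n) (simp_all add: taylor_mult, simp add: taylor_def pcompose_1)
lemma taylor_lin: "taylor [:-a, 1:] a = fps_X"
  by (simp add: taylor_def pcompose_pCons fps_of_poly_pCons)
lemma taylor_0: "taylor p a $ 0 = poly p a"
  by (simp add: taylor_def poly_0_coeff_0[symmetric] poly_pcompose)

lemma taylor_dvd:
  assumes "\<And>i. i < m \<Longrightarrow> taylor P a $ i = 0"
  shows "[:-a, 1:] ^ m dvd P"
proof -
  define S where "S = pcompose P [:a, 1:]"
  have cS: "coeff S i = 0" if "i < m" for i
    using assms[OF that] by (simp add: taylor_def S_def)
  have S: "S = monom 1 m * poly_shift m S"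
    by (auto simp: poly_eq_iff coeff_monom_mult coeff_poly_shift cS)
  have "P = pcompose S [:-a, 1:]"
    by (simp add: S_def pcompose_assoc[symmetric] pcompose_pCons)
  also have "\<dots> = pcompose (monom 1 m) [:-a, 1:] * pcompose (poly_shift m S) [:-a, 1:]"
    by (subst S) (simp add: pcompose_mult)
  also have "pcompose (monom 1 m) [:-a, 1:] = [:-a, 1:] ^ m"
    by (induct m) (simp_all add: monom_Suc pcompose_pCons pcompose_mult[symmetric] monom_0)
  finally show ?thesis by simp
qed

lemma decomp:
  fixes D :: "complex poly" and a :: complex
  assumes "D \<noteq> 0"
  defines "Q \<equiv> D div [:-a, 1:] ^ order a D"
  shows "D = [:-a, 1:] ^ order a D * Q" "poly Q a \<noteq> 0"
        "taylor D a = fps_X ^ order a D * taylor Q a"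
        "taylor Q a $ 0 \<noteq> 0"
proof -
  show D: "D = [:-a, 1:] ^ order a D * Q"
    unfolding Q_def using order_1[of a D] by simp
  have "Q \<noteq> 0" using D assms by auto
  have "order a D = order a ([:-a, 1:] ^ order a D) + order a Q"
    using assms by (subst D, subst order_mult) (use D in auto)
  hence "order a Q = 0" by (simp add: order_power_n_n)
  thus "poly Q a \<noteq> 0" using \<open>Q \<noteq> 0\<close> order_root by blast
  thus "taylor Q a $ 0 \<noteq> 0" by (simp add: taylor_0)
  show "taylor D a = fps_X ^ order a D * taylor Q a"
    by (subst D) (simp add: taylor_mult taylor_power taylor_lin)
qed

lemma charA:
  fixes D R :: "complex poly"
  assumes "D \<noteq> 0"
  shows "(\<exists>g. E = taylor D a * g + taylor R a) \<longleftrightarrow> (\<forall>n<order a D. taylor R a $ n = E $ n)"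
proof -
  define Q where "Q = D div [:-a, 1:] ^ order a D"
  note dec = decomp[OF assms, of a, folded Q_def]
  define m where "m = order a D"
  show ?thesis
  proof
    assume "\<exists>g. E = taylor D a * g + taylor R a"
    then obtain g where g: "E = taylor D a * g + taylor R a" by blast
    show "\<forall>n<order a D. taylor R a $ n = E $ n"
    proof (intro allI impI)
      fix n assume "n < order a D"
      have "E = fps_X ^ order a D * (taylor Q a * g) + taylor R a"
        using g dec(3) by (simp add: mult.assoc)
      thus "taylor R a $ n = E $ n" using \<open>n < order a D\<close>
        by (simp add: fps_X_power_mult_nth)
    qed
  next
    assume H: "\<forall>n<order a D. taylor R a $ n = E $ n"
    define F where "F = E - taylor R a"
    have F: "fps_X ^ m * fps_shift m F = F"
      using H by (auto simp: fps_eq_iff fps_X_power_mult_nth F_def m_def)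
    define g where "g = fps_shift m F * inverse (taylor Q a)"
    have "taylor D a * g = fps_X ^ m * fps_shift m F * (taylor Q a * inverse (taylor Q a))"
      using dec(3) by (simp add: g_def m_def mult_ac)
    also have "\<dots> = F" using dec(4) F by (simp add: inverse_mult_eq_1')
    finally show "\<exists>g. E = taylor D a * g + taylor R a"
      by (intro exI[of _ g]) (simp add: F_def)
  qed
qed

lemma degree_sum_order:
  fixes p :: "complex poly"
  assumes "p \<noteq> 0"
  shows "degree p = (\<Sum>z|poly p z = 0. order z p)"
proof -
  have "degree p = degree (smult (lead_coeff p) (\<Prod>z|poly p z = 0. [:-z, 1:] ^ order z p))"
    by (simp add: complex_poly_decompose)
  also have "\<dots> = (\<Sum>z|poly p z = 0. order z p)"
    using assms by (simp add: degree_prod_sum_eq degree_power_eq)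
  finally show ?thesis .
qed

lemma uniqB:
  fixes D P :: "complex poly"
  assumes "D \<noteq> 0" "degree P < degree D"
    and "\<And>a n. poly D a = 0 \<Longrightarrow> n < order a D \<Longrightarrow> taylor P a $ n = 0"
  shows "P = 0"
proof (rule ccontr)
  assume P0: "P \<noteq> 0"
  have ord: "order a D \<le> order a P" if "poly D a = 0" for a
    using taylor_dvd[of "order a D" P a] assms(3)[OF that] order_divides P0 by blast
  have sub: "{a. poly D a = 0} \<subseteq> {a. poly P a = 0}"
  proof
    fix a assume "a \<in> {a. poly D a = 0}"
    hence "order a D \<noteq> 0" using order_root assms(1) by auto
    with ord[of a] \<open>a \<in> _\<close> show "a \<in> {a. poly P a = 0}" using order_root[of P a] by auto
  qed
  have fin: "finite {a. poly P a = 0}" using P0 poly_roots_finite by blast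
  have "degree D = (\<Sum>z|poly D z = 0. order z D)" by (rule degree_sum_order[OF assms(1)])
  also have "\<dots> \<le> (\<Sum>z|poly D z = 0. order z P)"
    by (intro sum_mono ord) auto
  also have "\<dots> \<le> (\<Sum>z|poly P z = 0. order z P)"
    by (intro sum_mono2 fin sub) auto
  also have "\<dots> = degree P" by (rule degree_sum_order[OF P0, symmetric])
  finally show False using assms(2) by simp
qed

lemma taylor_jet: "taylor (jet a m h) a $ n = (if n \<le> m then h $ n else 0)"
  by (simp add: jet_def taylor_sum taylor_smult taylor_power taylor_lin fps_sum_nth
      fps_X_power_nth if_distrib[of "\<lambda>x. _ * x"] sum.delta cong: if_cong)

lemma degree_jet: "degree (jet a m h) \<le> m"
  unfolding jet_def
  by (intro degree_sum_le) (auto intro: order.trans[OF degree_smult_le] simp: degree_linear_power)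

lemma div_lemma:
  fixes U :: "complex fps"
  assumes "U $ 0 \<noteq> 0"
  shows "fps_X ^ m / (fps_X ^ m * U) = inverse U"
proof -
  have "fps_X ^ m / (fps_X ^ m * U) = (fps_X ^ m * 1) / (fps_X ^ m * U)" by simp
  also have "\<dots> = 1 / U" by (rule div_mult_mult1) simp
  also have "\<dots> = inverse U" using assms by (simp add: fps_divide_unit)
  finally show ?thesis .
qed

lemma eqmod_mult:
  fixes f g f' g' :: "complex fps"
  assumes "\<And>n. n < m \<Longrightarrow> f $ n = f' $ n" "\<And>n. n < m \<Longrightarrow> g $ n = g' $ n" "k < m"
  shows "(f * g) $ k = (f' * g') $ k"
  unfolding fps_mult_nth using assms by (intro sum.cong) auto

lemma other_root_dvd:
  fixes D :: "complex poly"
  assumes "D \<noteq> 0" "b \<noteq> a"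
  shows "[:-a, 1:] ^ order a D dvd D div [:-b, 1:] ^ order b D"
proof -
  define Q where "Q = D div [:-b, 1:] ^ order b D"
  note dec = decomp[OF assms(1), of b, folded Q_def]
  have "Q \<noteq> 0" using dec(1) assms(1) by auto
  have "order a ([:-b, 1:] ^ order b D) = 0"
    using assms(2) by (intro order_0I) auto
  hence "order a D = order a Q"
    using assms(1) by (subst dec(1), subst order_mult) (use dec(1) in auto)
  thus ?thesis unfolding Q_def[symmetric] using order_1[of a Q] by simp
qed

lemma W_cong:
  fixes D :: "complex poly"
  assumes "D \<noteq> 0" "n < order a D"
  shows "taylor (wedderburn_sum t D) a $ n = gp_exp t a $ n"
proof -
  define Rts where "Rts = {a. poly D a = 0}"
  have fin: "finite Rts" unfolding Rts_def using assms(1) poly_roots_finite by blast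
  have aR: "a \<in> Rts" unfolding Rts_def using assms order_root[of D a] by auto
  define Q where "Q = (\<lambda>b. D div [:-b, 1:] ^ order b D)"
  define h where "h = (\<lambda>b. gp_exp t b * (taylor ([:-b, 1:] ^ order b D) b / taylor D b))"
  define c where "c = (\<lambda>b. (taylor (jet b (order b D - 1) (h b)) a * taylor (Q b) a) $ n)"
  have W: "taylor (wedderburn_sum t D) a $ n = (\<Sum>b\<in>Rts. c b)"
    unfolding wedderburn_sum_def taylor_sum fps_sum_nth taylor_mult c_def Q_def h_def Rts_def ..
  have c0: "c b = 0" if bR: "b \<in> Rts - {a}" for b
  proof -
    have "b \<noteq> a" using bR by auto
    obtain S where S: "Q b = [:-a, 1:] ^ order a D * S"
      using other_root_dvd[OF assms(1) \<open>b \<noteq> a\<close>] unfolding Q_def by (auto elim!: dvdE)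
    have "c b = (taylor (jet b (order b D - 1) (h b)) a * 0) $ n"
      unfolding c_def
      by (rule eqmod_mult[OF _ _ assms(2)])
         (simp_all add: S taylor_mult taylor_power taylor_lin fps_X_power_mult_nth)
    thus ?thesis by simp
  qed
  define U where "U = taylor (Q a) a"
  have U: "taylor D a = fps_X ^ order a D * U" "U $ 0 \<noteq> 0"
    using decomp[OF assms(1), of a] unfolding U_def Q_def by auto
  have ha: "h a = gp_exp t a * inverse U"
    unfolding h_def using U by (simp add: taylor_power taylor_lin div_lemma)
  have "c a = (h a * U) $ n"
    unfolding c_def U_def[symmetric]
    by (rule eqmod_mult[OF _ _ assms(2)]) (auto simp: taylor_jet)
  also have "h a * U = gp_exp t a" using U(2) by (simp add: ha mult.assoc inverse_mult_eq_1' inverse_mult_eq_1)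
  finally have ca: "c a = gp_exp t a $ n" .
  have "(\<Sum>b\<in>Rts. c b) = c a + (\<Sum>b\<in>Rts - {a}. c b)"
    using fin aR by (rule sum.remove)
  also have "(\<Sum>b\<in>Rts - {a}. c b) = 0" using c0 by simp
  finally show ?thesis using W ca by simp
qed

lemma W_degree:
  fixes D :: "complex poly"
  assumes "degree D > 0"
  shows "degree (wedderburn_sum t D) < degree D"
  unfolding wedderburn_sum_def
proof (rule degree_sum_less[OF _ assms])
  fix b assume b: "b \<in> {a. poly D a = 0}"
  have D0: "D \<noteq> 0" using assms by auto
  define Q where "Q = D div [:-b, 1:] ^ order b D"
  note dec = decomp[OF D0, of b, folded Q_def]
  have "Q \<noteq> 0" using dec(1) D0 by auto
  have dD: "degree D = order b D + degree Q"
    by (subst dec(1)) (simp add: degree_mult_eq \<open>Q \<noteq> 0\<close> degree_linear_power)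
  have "order b D \<noteq> 0" using b D0 order_root[of D b] by auto
  have "degree (jet b (order b D - 1) (gp_exp t b * (taylor ([:- b, 1:] ^ order b D) b / taylor D b)) * Q)
     \<le> (order b D - 1) + degree Q"
    by (rule order.trans[OF degree_mult_le]) (simp add: degree_jet)
  also have "\<dots> < degree D" using dD \<open>order b D \<noteq> 0\<close> by simp
  finally show "degree (jet b (order b D - 1) (gp_exp t b * (taylor ([:- b, 1:] ^ order b D) b / taylor D b)) *
          (D div [:- b, 1:] ^ order b D)) < degree D" unfolding Q_def .
qed

theorem mainTheorem5:
  fixes t :: real and D :: "complex poly"
  assumes "degree D > 0"
  shows "\<forall>R :: complex poly.
           (degree R < degree D \<and>
            (\<exists>q :: gpoly. gp_exp t = gp_add (gp_mult (gp_of_poly D) q) (gp_of_poly R)))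
           \<longleftrightarrow> R = wedderburn_sum t D"
proof
  fix R :: "complex poly"
  have D0: "D \<noteq> 0" using assms by auto
  have ex: "(\<exists>q :: gpoly. gp_exp t = gp_add (gp_mult (gp_of_poly D) q) (gp_of_poly R))
       \<longleftrightarrow> (\<forall>a n. n < order a D \<longrightarrow> taylor R a $ n = gp_exp t a $ n)" for R
  proof -
    have "(\<exists>q :: gpoly. gp_exp t = gp_add (gp_mult (gp_of_poly D) q) (gp_of_poly R))
       \<longleftrightarrow> (\<exists>q :: gpoly. \<forall>a. gp_exp t a = taylor D a * q a + taylor R a)"
      by (simp add: fun_eq_iff gp_add_def gp_mult_def gp_of_poly_def)
    also have "\<dots> \<longleftrightarrow> (\<forall>a. \<exists>g. gp_exp t a = taylor D a * g + taylor R a)"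
      by (rule choice_iff[symmetric])
    also have "\<dots> \<longleftrightarrow> (\<forall>a n. n < order a D \<longrightarrow> taylor R a $ n = gp_exp t a $ n)"
      using charA[OF D0] by blast
    finally show ?thesis .
  qed
  have Wok: "\<forall>a n. n < order a D \<longrightarrow> taylor (wedderburn_sum t D) a $ n = gp_exp t a $ n"
    using W_cong[OF D0] by blast
  show "(degree R < degree D \<and>
            (\<exists>q :: gpoly. gp_exp t = gp_add (gp_mult (gp_of_poly D) q) (gp_of_poly R)))
           \<longleftrightarrow> R = wedderburn_sum t D"
  proof
    assume H: "degree R < degree D \<and>
            (\<exists>q :: gpoly. gp_exp t = gp_add (gp_mult (gp_of_poly D) q) (gp_of_poly R))"
    hence Rok: "\<forall>a n. n < order a D \<longrightarrow> taylor R a $ n = gp_exp t a $ n" using ex by blast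
    have "R - wedderburn_sum t D = 0"
    proof (rule uniqB[OF D0])
      show "degree (R - wedderburn_sum t D) < degree D"
        using H W_degree[OF assms, of t] degree_diff_le_max[of R "wedderburn_sum t D"]
        by (meson le_less_trans max_less_iff_conj)
      show "taylor (R - wedderburn_sum t D) a $ n = 0" if "n < order a D" for a n
        using that Rok Wok by (simp add: taylor_diff)
    qed
    thus "R = wedderburn_sum t D" by simp
  next
    assume "R = wedderburn_sum t D"
    thus "degree R < degree D \<and>
            (\<exists>q :: gpoly. gp_exp t = gp_add (gp_mult (gp_of_poly D) q) (gp_of_poly R))"
      using W_degree[OF assms] ex Wok by blast
  qed
qed

end
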